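(* Let $\mu$ and $\pi$ be probability measures on a Polish space $\mathcal Y$ with metric $d$ of diameter $1$, and let $\mathcal D_\mu,\mathcal D_\pi\colon\mathcal Y\to[0,1]$. For $\rho>0$ set $$A_\rho=\{x\in\mathcal Y:\exists y\in\mathcal Y\text{ with }\mathcal D_\pi(y)>\mathcal D_\pi(x)+d(x,y)/\rho\},\qquad\bar A_\rho=\{x:d(x,A_\rho)\le\rho\}.$$ Assume $\delta,\varepsilon_1,\varepsilon_2$ satisfy $$\int\mathcal D_\pi\,d\pi\ge\delta,\quad\|\mu-\pi\|_d\le\varepsilon_1,\quad\sup_x|\mathcal D_\pi(x)-\mathcal D_\mu(x)|\le\varepsilon_2.$$ Define probability measures $\tilde\mu(A)=c_\mu\int_A\mathcal D_\mu\,d\mu$, $\tilde\pi(A)=c_\pi\int_A\mathcal D_\pi\,d\pi$ with normalising constants $c_\mu,c_\pi$. Then for every $\rho\le1$, $$\|\tilde\mu-\tilde\pi\|_d\le\frac1\delta\Bigl(\frac{3\varepsilon_1}\rho+\varepsilon_2+2\pi(\bar A_\rho)\Bigr).$$ In particular $\int\mathcal D_\mu\,d\mu>0$ whenever the right-hand side is strictly smaller than $1$.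
   Context: $\|\cdot\|_d$ denotes the Wasserstein-1 distance with respect to $d$: $\|\mu-\pi\|_d=\sup\{\int fd\mu-\int fd\pi: f\ \text{1-Lipschitz w.r.t. } d\}$. *)

theory Defs
  imports "HOL-Probability.Probability"
begin

text \<open>Wasserstein-1 (Kantorovich-Rubinstein) distance w.r.t. the metric dist of the type:
  supremum over all 1-Lipschitz real functions f of int f dM - int f dN.\<close>
definition W1 :: "'a::metric_space measure \<Rightarrow> 'a measure \<Rightarrow> real" where
  "W1 M N = Sup {(\<integral>x. f x \<partial>M) - (\<integral>x. f x \<partial>N) | f :: 'a \<Rightarrow> real. 1-lipschitz_on UNIV f}"

definition reweight :: "'a measure \<Rightarrow> ('a \<Rightarrow> real) \<Rightarrow> 'a measure" where
  "reweight M D = density M (\<lambda>x. ennreal (D x / (\<integral>y. D y \<partial>M)))"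

definition A_set :: "('a::metric_space \<Rightarrow> real) \<Rightarrow> real \<Rightarrow> 'a set" where
  "A_set D \<rho> = {x. \<exists>y. D y > D x + dist x y / \<rho>}"

text \<open>The closed rho-neighbourhood of A_rho; d(x, empty set) = infinity, so it is empty if A_rho is.\<close>
definition A_bar :: "('a::metric_space \<Rightarrow> real) \<Rightarrow> real \<Rightarrow> 'a set" where
  "A_bar D \<rho> = {x. A_set D \<rho> \<noteq> {} \<and> infdist x (A_set D \<rho>) \<le> \<rho>}"


end

theory Submission
  imports Defs
begin

lemma meas_transfer:
  assumes "sets M = sets borel" "f \<in> borel_measurable borel"
  shows "f \<in> borel_measurable M"
  using assms by (simp add: measurable_cong_sets[OF assms(1) refl])

lemma int_bounded:
  fixes f :: "'a::topological_space \<Rightarrow> real"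
  assumes "prob_space M" "sets M = sets borel" "f \<in> borel_measurable borel"
    "\<And>x. lo \<le> f x" "\<And>x. f x \<le> hi"
  shows "integrable M f \<and> lo \<le> integral\<^sup>L M f \<and> integral\<^sup>L M f \<le> hi"
proof -
  interpret prob_space M by fact
  have fm: "f \<in> borel_measurable M" using meas_transfer assms by blast
  have i: "integrable M f"
  proof (rule integrable_const_bound[where B="max \<bar>lo\<bar> \<bar>hi\<bar>"])
    show "AE x in M. norm (f x) \<le> max \<bar>lo\<bar> \<bar>hi\<bar>"
      by (intro AE_I2) (smt (verit) assms(4) assms(5) real_norm_def)
  qed (rule fm)
  have "integral\<^sup>L M (\<lambda>_. lo) \<le> integral\<^sup>L M f"
    by (rule integral_mono) (use i assms in auto)
  moreover have "integral\<^sup>L M f \<le> integral\<^sup>L M (\<lambda>_. hi)"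
    by (rule integral_mono) (use i assms in auto)
  ultimately show ?thesis using i by (simp add: prob_space)
qed

lemma int_abs_bounded:
  fixes f :: "'a::topological_space \<Rightarrow> real"
  assumes "prob_space M" "sets M = sets borel" "f \<in> borel_measurable borel"
    "\<And>x. \<bar>f x\<bar> \<le> B"
  shows "integrable M f"
  using int_bounded[OF assms(1-3), of "-B" B] assms(4) by (meson abs_le_iff minus_le_iff)

lemma W1_upper:
  fixes \<mu> \<pi> :: "'a::metric_space measure"
  assumes diam: "bounded (UNIV :: 'a set)" "diameter (UNIV :: 'a set) = 1"
    and prob: "prob_space \<mu>" "prob_space \<pi>"
    and sets: "sets \<mu> = sets borel" "sets \<pi> = sets borel"
    and L: "1-lipschitz_on UNIV g"
  shows "(\<integral>x. g x \<partial>\<mu>) - (\<integral>x. g x \<partial>\<pi>) \<le> W1 \<mu> \<pi>"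
proof -
  have dist1: "dist x y \<le> 1" for x y :: 'a
    using diameter_bounded_bound[OF diam(1), of x y] diam(2) by simp
  have bnd: "(\<integral>x. f x \<partial>\<mu>) - (\<integral>x. f x \<partial>\<pi>) \<le> 2" if f: "1-lipschitz_on UNIV f" for f :: "'a \<Rightarrow> real"
  proof -
    fix x0 :: 'a
    have fb: "f x0 - 1 \<le> f x \<and> f x \<le> f x0 + 1" for x
      using lipschitz_onD[OF f, of x x0] dist1[of x x0] by (auto simp: dist_real_def)
    have m: "f \<in> borel_measurable borel"
      by (rule borel_measurable_continuous_onI, rule lipschitz_on_continuous_on[OF f])
    show ?thesis
      using int_bounded[OF prob(1) sets(1) m, of "f x0 - 1" "f x0 + 1"]
        int_bounded[OF prob(2) sets(2) m, of "f x0 - 1" "f x0 + 1"] fb by auto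
  qed
  show ?thesis unfolding W1_def
    by (rule cSup_upper) (use L bnd in \<open>auto simp: bdd_above_def\<close>)
qed

lemma W1_le:
  fixes \<mu> \<pi> :: "'a::metric_space measure"
  assumes diam: "bounded (UNIV :: 'a set)" "diameter (UNIV :: 'a set) = 1"
    and prob: "prob_space \<mu>" "prob_space \<pi>"
    and sets: "sets \<mu> = sets borel" "sets \<pi> = sets borel"
    and L: "C-lipschitz_on UNIV g" and C: "C > 0"
  shows "(\<integral>x. g x \<partial>\<mu>) - (\<integral>x. g x \<partial>\<pi>) \<le> C * W1 \<mu> \<pi>"
proof -
  have L1: "1-lipschitz_on UNIV (\<lambda>x. g x / C)"
  proof (rule lipschitz_onI)
    fix x y :: 'a
    have "dist (g x) (g y) \<le> C * dist x y" using lipschitz_onD[OF L] by auto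
    then show "dist (g x / C) (g y / C) \<le> 1 * dist x y"
      using C by (simp add: dist_real_def divide_simps abs_divide mult.commute flip: diff_divide_distrib)
  qed simp
  have "(\<integral>x. g x / C \<partial>\<mu>) - (\<integral>x. g x / C \<partial>\<pi>) \<le> W1 \<mu> \<pi>"
    by (rule W1_upper[OF assms(1-6) L1])
  then have "((\<integral>x. g x \<partial>\<mu>) - (\<integral>x. g x \<partial>\<pi>)) / C \<le> W1 \<mu> \<pi>"
    by (simp add: diff_divide_distrib)
  then show ?thesis using C by (simp add: divide_simps mult.commute)
qed


lemma max0_lip: "\<bar>max 0 u - max 0 v\<bar> \<le> \<bar>u - v\<bar>" for u v :: real
  by (simp add: abs_if max_def)

lemma l1: "\<bar>a - b\<bar> \<le> e \<Longrightarrow> \<bar>g\<bar> \<le> 1 \<Longrightarrow> 0 \<le> k - b \<Longrightarrow> k - b \<le> p \<Longrightarrow> a * g \<le> e + k * g + p" for a b e g k p :: real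
proof -
  assume as: "\<bar>a - b\<bar> \<le> e" "\<bar>g\<bar> \<le> 1" "0 \<le> k - b" "k - b \<le> p"
  have "(a - b) * g \<le> e" using as abs_mult[of "a-b" g] mult_mono[of "\<bar>a-b\<bar>" e "\<bar>g\<bar>" 1]
    by (smt (verit) abs_ge_self abs_ge_zero)
  moreover have "(b - k) * g \<le> p" using as abs_mult[of "b-k" g] mult_mono[of "\<bar>b-k\<bar>" p "\<bar>g\<bar>" 1]
    by (smt (verit) abs_ge_self abs_ge_zero)
  ultimately show ?thesis by (simp add: algebra_simps)
qed
lemma l2: "\<bar>g\<bar> \<le> 1 \<Longrightarrow> 0 \<le> k - b \<Longrightarrow> k - b \<le> p \<Longrightarrow> k * g - p \<le> b * g" for b g k p :: real
proof -
  assume as: "\<bar>g\<bar> \<le> 1" "0 \<le> k - b" "k - b \<le> p"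
  have "(k - b) * g \<le> p" using as abs_mult[of "k-b" g] mult_mono[of "\<bar>k-b\<bar>" p "\<bar>g\<bar>" 1]
    by (smt (verit) abs_ge_self abs_ge_zero)
  then show ?thesis by (simp add: algebra_simps)
qed
lemma l3: "\<bar>hx\<bar> \<le> 1 \<Longrightarrow> \<bar>gy\<bar> \<le> 1 \<Longrightarrow> \<bar>hx - hy\<bar> \<le> d / r \<Longrightarrow> \<bar>gx - gy\<bar> \<le> d \<Longrightarrow> \<bar>hx * gx - hy * gy\<bar> \<le> (1 + 1/r) * d" for hx hy gx gy d r :: real
proof -
  assume as: "\<bar>hx\<bar> \<le> 1" "\<bar>gy\<bar> \<le> 1" "\<bar>hx - hy\<bar> \<le> d / r" "\<bar>gx - gy\<bar> \<le> d"
  have "hx * gx - hy * gy = hx * (gx - gy) + (hx - hy) * gy" by (simp add: algebra_simps)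
  moreover have "\<bar>hx * (gx - gy)\<bar> \<le> d" using as abs_mult[of hx "gx-gy"] mult_mono[of "\<bar>hx\<bar>" 1 "\<bar>gx-gy\<bar>" d]
    by (smt (verit) abs_ge_zero)
  moreover have "\<bar>(hx - hy) * gy\<bar> \<le> d / r" using as abs_mult[of "hx-hy" gy] mult_mono[of "\<bar>hx-hy\<bar>" "d/r" "\<bar>gy\<bar>" 1]
    by (smt (verit) abs_ge_zero)
  ultimately show ?thesis by (simp add: algebra_simps)
qed

lemma l4: "\<bar>a\<bar> \<le> 1 \<Longrightarrow> \<bar>b\<bar> \<le> B \<Longrightarrow> \<bar>a * b\<bar> \<le> B" for a b B :: real
proof -
  assume as: "\<bar>a\<bar> \<le> 1" "\<bar>b\<bar> \<le> B"
  have "\<bar>a\<bar> * \<bar>b\<bar> \<le> 1 * B" by (rule mult_mono) (use as in auto)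
  then show ?thesis by (simp add: abs_mult)
qed

theorem lemma5p3:
  fixes \<mu> \<pi> :: "'a::polish_space measure"
    and D\<mu> D\<pi> :: "'a \<Rightarrow> real"
    and \<delta> \<epsilon>1 \<epsilon>2 \<rho> :: real
  assumes diam: "bounded (UNIV :: 'a set)" "diameter (UNIV :: 'a set) = 1"
    and prob: "prob_space \<mu>" "prob_space \<pi>"
    and sets: "sets \<mu> = sets borel" "sets \<pi> = sets borel"
    and meas: "D\<mu> \<in> borel_measurable borel" "D\<pi> \<in> borel_measurable borel"
    and range: "\<And>x. 0 \<le> D\<mu> x \<and> D\<mu> x \<le> 1" "\<And>x. 0 \<le> D\<pi> x \<and> D\<pi> x \<le> 1"
    and delta: "\<delta> > 0" "(\<integral>x. D\<pi> x \<partial>\<pi>) \<ge> \<delta>"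
    and eps1: "W1 \<mu> \<pi> \<le> \<epsilon>1"
    and eps2: "\<And>x. \<bar>D\<pi> x - D\<mu> x\<bar> \<le> \<epsilon>2"
    and rho: "0 < \<rho>" "\<rho> \<le> 1"
  shows "((\<integral>x. D\<mu> x \<partial>\<mu>) > 0 \<longrightarrow>
           W1 (reweight \<mu> D\<mu>) (reweight \<pi> D\<pi>)
             \<le> (1 / \<delta>) * (3 * \<epsilon>1 / \<rho> + \<epsilon>2 + 2 * measure \<pi> (A_bar D\<pi> \<rho>)))
       \<and> ((1 / \<delta>) * (3 * \<epsilon>1 / \<rho> + \<epsilon>2 + 2 * measure \<pi> (A_bar D\<pi> \<rho>)) < 1
           \<longrightarrow> (\<integral>x. D\<mu> x \<partial>\<mu>) > 0)"
proof -
  define A where "A = A_set D\<pi> \<rho>"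
  define Ab where "Ab = A_bar D\<pi> \<rho>"
  define mA where "mA = measure \<pi> Ab"
  define Zm where "Zm = (\<integral>x. D\<mu> x \<partial>\<mu>)"
  define Zp where "Zp = (\<integral>x. D\<pi> x \<partial>\<pi>)"
  have dist1: "dist x y \<le> 1" for x y :: 'a
    using diameter_bounded_bound[OF diam(1), of x y] diam(2) by simp
  have mA0: "mA \<ge> 0" unfolding mA_def by simp
  have e1: "\<epsilon>1 \<ge> 0"
    using W1_upper[OF diam prob sets, of "\<lambda>_. 0"] eps1 by (simp add: lipschitz_on_def)
  have e2: "\<epsilon>2 \<ge> 0" using eps2[of undefined] by linarith
  have Wle: "(\<integral>x. g x \<partial>\<mu>) - (\<integral>x. g x \<partial>\<pi>) \<le> C * \<epsilon>1"
    if "C-lipschitz_on UNIV g" "C > 0" for g C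
    using W1_le[OF diam prob sets that] eps1 that(2) by (smt (verit) mult_left_mono)
  have Dm: "D\<mu> \<in> borel_measurable borel" and Dp: "D\<pi> \<in> borel_measurable borel" by fact+
  define h where "h x = (SUP y. D\<pi> y - dist x y / \<rho>)" for x
  have bdd: "bdd_above (range (\<lambda>y. D\<pi> y - dist x y / \<rho>))" for x
    using range(2) rho(1) by (intro bdd_aboveI[where M=1]) (auto, smt (verit) divide_nonneg_pos zero_le_dist)
  have hge: "D\<pi> x \<le> h x" for x
    unfolding h_def using cSUP_upper[OF _ bdd, of x x] by simp
  have hle: "h x \<le> 1" for x
    unfolding h_def using range(2) rho(1)
    by (intro cSUP_least) (auto, smt (verit) divide_nonneg_pos zero_le_dist)
  have hlip: "(1/\<rho>)-lipschitz_on UNIV h"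
  proof (rule lipschitz_onI)
    have one: "h x \<le> h x' + dist x x' / \<rho>" for x x'
      unfolding h_def
    proof (intro cSUP_least)
      fix y
      have "D\<pi> y - dist x y / \<rho> \<le> (D\<pi> y - dist x' y / \<rho>) + dist x x' / \<rho>"
        using dist_triangle[of x' y x] rho(1) by (simp add: dist_commute divide_simps)
      also have "\<dots> \<le> (SUP y. D\<pi> y - dist x' y / \<rho>) + dist x x' / \<rho>"
        using cSUP_upper[OF _ bdd, of y x'] by simp
      finally show "D\<pi> y - dist x y / \<rho> \<le> (SUP y. D\<pi> y - dist x' y / \<rho>) + dist x x' / \<rho>" .
    qed simp
    fix x y :: 'a
    show "dist (h x) (h y) \<le> 1 / \<rho> * dist x y"
      using one[of x y] one[of y x] by (simp add: dist_real_def dist_commute abs_le_iff)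
  qed (use rho in simp)
  have hm: "h \<in> borel_measurable borel"
    by (rule borel_measurable_continuous_onI, rule lipschitz_on_continuous_on[OF hlip])
  define \<phi> where "\<phi> x = (if A = {} then 0 else max 0 (1 - infdist x A / \<rho>))" for x
  have \<phi>0: "0 \<le> \<phi> x" for x unfolding \<phi>_def by auto
  have \<phi>1: "\<phi> x \<le> 1" for x unfolding \<phi>_def using rho(1) by (auto simp: infdist_nonneg)
  have h\<phi>: "h x - D\<pi> x \<le> \<phi> x" for x
  proof (cases "x \<in> A")
    case True
    then show ?thesis using hle[of x] range(2)[of x] unfolding \<phi>_def by auto
  next
    case False
    have "h x \<le> D\<pi> x" unfolding h_def
    proof (intro cSUP_least)
      fix y show "D\<pi> y - dist x y / \<rho> \<le> D\<pi> x"
      proof -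
        have "\<not> D\<pi> x + dist x y / \<rho> < D\<pi> y" using False unfolding A_def A_set_def by auto
        then show ?thesis by linarith
      qed
    qed simp
    then show ?thesis using \<phi>0[of x] by linarith
  qed
  have \<phi>lip: "(1/\<rho>)-lipschitz_on UNIV \<phi>"
  proof (rule lipschitz_onI)
    fix x y :: 'a
    show "dist (\<phi> x) (\<phi> y) \<le> 1 / \<rho> * dist x y"
    proof (cases "A = {}")
      case True then show ?thesis using rho by (simp add: \<phi>_def)
    next
      case False
      have "\<bar>\<phi> x - \<phi> y\<bar> \<le> \<bar>(1 - infdist x A / \<rho>) - (1 - infdist y A / \<rho>)\<bar>"
        using False max0_lip unfolding \<phi>_def by simp
      also have "\<dots> = \<bar>infdist x A - infdist y A\<bar> / \<rho>"
        using rho(1) by (simp add: divide_simps abs_divide)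
      also have "\<dots> \<le> dist x y / \<rho>"
        using infdist_triangle_abs[of x A y] rho(1) by (simp add: divide_right_mono)
      finally show ?thesis by (simp add: dist_real_def)
    qed
  qed (use rho in simp)
  have \<phi>m: "\<phi> \<in> borel_measurable borel"
    by (rule borel_measurable_continuous_onI, rule lipschitz_on_continuous_on[OF \<phi>lip])
  have Ab_eq: "Ab = (if A = {} then {} else {x. infdist x A \<le> \<rho>})"
    unfolding Ab_def A_bar_def A_def by auto
  have Ab_sets: "Ab \<in> sets \<pi>"
  proof -
    have "closed Ab"
      unfolding Ab_eq by (auto intro!: closed_Collect_le continuous_on_infdist continuous_on_id)
    then show ?thesis using sets(2) by simp
  qed
  have \<phi>Ab: "\<phi> x \<le> indicator Ab x" for x
    unfolding \<phi>_def Ab_eq using rho(1) by (auto simp: indicator_def divide_simps infdist_nonneg)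
  have int\<phi>p: "(\<integral>x. \<phi> x \<partial>\<pi>) \<le> mA"
  proof -
    have "(\<integral>x. \<phi> x \<partial>\<pi>) \<le> (\<integral>x. indicator Ab x \<partial>\<pi>)"
    proof (rule integral_mono)
      show "integrable \<pi> \<phi>" using int_bounded[OF prob(2) sets(2) \<phi>m, of 0 1] \<phi>0 \<phi>1 by auto
      have "Ab \<in> sets borel" using Ab_sets sets(2) by simp
      then have "(indicator Ab :: 'a \<Rightarrow> real) \<in> borel_measurable borel" by simp
      from int_abs_bounded[OF prob(2) sets(2) this, of 1]
      show "integrable \<pi> (indicator Ab :: 'a \<Rightarrow> real)" by (simp add: indicator_def)
    qed (use \<phi>Ab in auto)
    also have "\<dots> = mA" unfolding mA_def using sets_eq_imp_space_eq[OF sets(2)] by simp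
    finally show ?thesis .
  qed
  have int\<phi>m: "(\<integral>x. \<phi> x \<partial>\<mu>) \<le> mA + \<epsilon>1 / \<rho>"
    using Wle[OF \<phi>lip] rho(1) int\<phi>p by simp
  have hint: "(\<integral>x. h x \<partial>\<pi>) - (\<integral>x. h x \<partial>\<mu>) \<le> \<epsilon>1 / \<rho>"
  proof -
    have "(1/\<rho>)-lipschitz_on UNIV (\<lambda>x. - h x)"
      using hlip by (simp add: lipschitz_on_def dist_real_def abs_minus_commute)
    from Wle[OF this] rho(1) show ?thesis by simp
  qed
  have Iu: "integrable \<mu> u" if "u \<in> borel_measurable borel" "\<And>x. \<bar>u x\<bar> \<le> B" for u :: "'a \<Rightarrow> real" and B
    using int_abs_bounded[OF prob(1) sets(1) that] .
  have Ip: "integrable \<pi> u" if "u \<in> borel_measurable borel" "\<And>x. \<bar>u x\<bar> \<le> B" for u :: "'a \<Rightarrow> real" and B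
    using int_abs_bounded[OF prob(2) sets(2) that] .
  have hb: "\<bar>h x\<bar> \<le> 1" for x using hge[of x] hle[of x] range(2)[of x] by auto
  have \<phi>b: "\<bar>\<phi> x\<bar> \<le> 1" for x using \<phi>0[of x] \<phi>1[of x] by auto
  have Dmb: "\<bar>D\<mu> x\<bar> \<le> 1" and Dpb: "\<bar>D\<pi> x\<bar> \<le> 1" for x using range[of x] by auto
  have hmu: "integrable \<mu> h" "integrable \<pi> h" using Iu[OF hm hb] Ip[OF hm hb] .
  have phimu: "integrable \<mu> \<phi>" "integrable \<pi> \<phi>" using Iu[OF \<phi>m \<phi>b] Ip[OF \<phi>m \<phi>b] .
  have Dmu: "integrable \<mu> D\<mu>" "integrable \<mu> D\<pi>" "integrable \<pi> D\<pi>"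
    using Iu[OF Dm Dmb] Iu[OF Dp Dpb] Ip[OF Dp Dpb] .
  interpret pm: prob_space \<mu> by fact
  interpret pp: prob_space \<pi> by fact
  have ZpZ: "Zp \<ge> \<delta>" using delta unfolding Zp_def by simp
  have hpi: "(\<integral>x. h x \<partial>\<pi>) \<ge> Zp"
    unfolding Zp_def by (rule integral_mono) (use hmu Dmu hge in auto)
  have part2: "Zm > 0" if R: "(1 / \<delta>) * (3 * \<epsilon>1 / \<rho> + \<epsilon>2 + 2 * mA) < 1"
  proof -
    have E: "3 * \<epsilon>1 / \<rho> + \<epsilon>2 + 2 * mA < \<delta>" using R delta(1) by (simp add: divide_simps mult.commute)
    have "(\<integral>x. D\<pi> x - \<epsilon>2 \<partial>\<mu>) \<le> Zm"
      unfolding Zm_def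
    proof (rule integral_mono)
      show "integrable \<mu> (\<lambda>x. D\<pi> x - \<epsilon>2)" using Dmu by simp
      show "integrable \<mu> D\<mu>" using Dmu by simp
      show "D\<pi> x - \<epsilon>2 \<le> D\<mu> x" for x using eps2[of x] by (simp add: abs_le_iff)
    qed
    then have s1: "(\<integral>x. D\<pi> x \<partial>\<mu>) - \<epsilon>2 \<le> Zm"
      using Dmu by (simp add: pm.prob_space)
    have "(\<integral>x. h x - \<phi> x \<partial>\<mu>) \<le> (\<integral>x. D\<pi> x \<partial>\<mu>)"
    proof (rule integral_mono)
      show "integrable \<mu> (\<lambda>x. h x - \<phi> x)" using hmu phimu by simp
      show "integrable \<mu> D\<pi>" using Dmu by simp
      show "h x - \<phi> x \<le> D\<pi> x" for x using h\<phi>[of x] by simp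
    qed
    then have s2: "(\<integral>x. h x \<partial>\<mu>) - (\<integral>x. \<phi> x \<partial>\<mu>) \<le> (\<integral>x. D\<pi> x \<partial>\<mu>)"
      using hmu phimu by simp
    have "\<epsilon>1 / \<rho> \<ge> 0" using e1 rho by simp
    then show ?thesis using s1 s2 hint hpi ZpZ int\<phi>m E mA0 e2 by linarith
  qed
  have part1: "W1 (reweight \<mu> D\<mu>) (reweight \<pi> D\<pi>) \<le> (1 / \<delta>) * (3 * \<epsilon>1 / \<rho> + \<epsilon>2 + 2 * mA)"
    if Zm0: "Zm > 0"
  proof -
    have Zp0: "Zp > 0" using ZpZ delta by simp
    define E where "E = 3 * \<epsilon>1 / \<rho> + \<epsilon>2 + 2 * mA"
    have E0: "E \<ge> 0" unfolding E_def using e1 e2 mA0 rho by simp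
    have main: "(\<integral>x. f x \<partial>reweight \<mu> D\<mu>) - (\<integral>x. f x \<partial>reweight \<pi> D\<pi>) \<le> (1 / \<delta>) * E"
      if f: "1-lipschitz_on UNIV f" for f
    proof -
      have fm: "f \<in> borel_measurable borel"
        by (rule borel_measurable_continuous_onI, rule lipschitz_on_continuous_on[OF f])
      have fd: "\<bar>f x - f y\<bar> \<le> dist x y" for x y
        using lipschitz_onD[OF f, of x y] by (simp add: dist_real_def)
      have fd1: "\<bar>f x - f y\<bar> \<le> 1" for x y using fd[of x y] dist1[of x y] by simp
      fix x0
      have fb: "\<bar>f x\<bar> \<le> \<bar>f x0\<bar> + 1" for x using fd1[of x x0] by linarith
      have iDmf: "integrable \<mu> (\<lambda>x. D\<mu> x * f x)"
        by (rule Iu[where B="\<bar>f x0\<bar> + 1"]) (use fm Dm in simp,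
          rule l4[OF Dmb fb])
      have iDpf: "integrable \<pi> (\<lambda>x. D\<pi> x * f x)"
        by (rule Ip[where B="\<bar>f x0\<bar> + 1"]) (use fm Dp in simp,
          rule l4[OF Dpb fb])
      have rw: "(\<integral>x. f x \<partial>reweight M D) = (\<integral>x. D x * f x \<partial>M) / Z"
        if "M = \<mu> \<and> D = D\<mu> \<and> Z = Zm \<or> M = \<pi> \<and> D = D\<pi> \<and> Z = Zp" for M D Z
      proof -
        have sM: "sets M = sets borel" and DM: "D \<in> borel_measurable borel" and Z: "Z = (\<integral>x. D x \<partial>M)"
          and Dn: "\<And>x. 0 \<le> D x" and Z0: "Z > 0"
          using that sets meas range Zm0 Zp0 unfolding Zm_def Zp_def by auto
        have "(\<integral>x. f x \<partial>reweight M D) = (\<integral>x. (D x / Z) *\<^sub>R f x \<partial>M)"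
          unfolding reweight_def Z[symmetric]
        proof (rule integral_density)
          show "f \<in> borel_measurable M" using meas_transfer[OF sM fm] .
          have "(\<lambda>x. D x / Z) \<in> borel_measurable borel" using DM by simp
          then show "(\<lambda>x. D x / Z) \<in> borel_measurable M" using meas_transfer[OF sM] by blast
          show "AE x in M. 0 \<le> D x / Z" using Dn Z0 by simp
        qed
        also have "\<dots> = (\<integral>x. D x * f x \<partial>M) / Z" by simp
        finally show ?thesis .
      qed
      define c where "c = (\<integral>x. D\<mu> x * f x \<partial>\<mu>) / Zm"
      define g where "g x = f x - c" for x
      have cb: "\<bar>g x\<bar> \<le> 1" for x
      proof -
        have "(\<integral>y. D\<mu> y * (f x - 1) \<partial>\<mu>) \<le> (\<integral>y. D\<mu> y * f y \<partial>\<mu>)"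
        proof (rule integral_mono)
          show "integrable \<mu> (\<lambda>y. D\<mu> y * (f x - 1))" using Dmu by simp
          show "integrable \<mu> (\<lambda>y. D\<mu> y * f y)" by (rule iDmf)
          show "D\<mu> y * (f x - 1) \<le> D\<mu> y * f y" for y
            using fd1[of x y] range(1)[of y] by (intro mult_left_mono) (auto simp: abs_le_iff)
        qed
        moreover have "(\<integral>y. D\<mu> y * f y \<partial>\<mu>) \<le> (\<integral>y. D\<mu> y * (f x + 1) \<partial>\<mu>)"
        proof (rule integral_mono)
          show "integrable \<mu> (\<lambda>y. D\<mu> y * (f x + 1))" using Dmu by simp
          show "integrable \<mu> (\<lambda>y. D\<mu> y * f y)" by (rule iDmf)
          show "D\<mu> y * f y \<le> D\<mu> y * (f x + 1)" for y
            using fd1[of x y] range(1)[of y] by (intro mult_left_mono) (auto simp: abs_le_iff)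
        qed
        ultimately have "Zm * (f x - 1) \<le> c * Zm \<and> c * Zm \<le> Zm * (f x + 1)"
          unfolding c_def Zm_def using Zm0 by (simp add: Zm_def)
        then have "f x - 1 \<le> c \<and> c \<le> f x + 1" using Zm0
          by (metis mult.commute mult_le_cancel_left_pos)
        then show ?thesis unfolding g_def by auto
      qed
      have gm: "g \<in> borel_measurable borel" unfolding g_def using fm by simp
      have iDmg: "integrable \<mu> (\<lambda>x. D\<mu> x * g x)"
        by (rule Iu[where B=1]) (use gm Dm in simp, rule l4[OF Dmb cb])
      have iDpg: "integrable \<pi> (\<lambda>x. D\<pi> x * g x)"
        by (rule Ip[where B=1]) (use gm Dp in simp, rule l4[OF Dpb cb])
      have ihgm: "integrable \<mu> (\<lambda>x. h x * g x)" "integrable \<pi> (\<lambda>x. h x * g x)"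
        by (rule Iu[where B=1], use gm hm in simp, rule l4[OF hb cb])
           (rule Ip[where B=1], use gm hm in simp, rule l4[OF hb cb])
      have g0: "(\<integral>x. D\<mu> x * g x \<partial>\<mu>) = 0"
      proof -
        have "(\<integral>x. D\<mu> x * g x \<partial>\<mu>) = (\<integral>x. D\<mu> x * f x - D\<mu> x * c \<partial>\<mu>)"
          unfolding g_def by (simp add: algebra_simps)
        also have "\<dots> = (\<integral>x. D\<mu> x * f x \<partial>\<mu>) - Zm * c"
          using iDmf Dmu unfolding Zm_def by simp
        finally show ?thesis unfolding c_def using Zm0 by simp
      qed
      have gp: "(\<integral>x. D\<pi> x * f x \<partial>\<pi>) = (\<integral>x. D\<pi> x * g x \<partial>\<pi>) + Zp * c"
      proof -
        have "(\<integral>x. D\<pi> x * f x \<partial>\<pi>) = (\<integral>x. D\<pi> x * g x + D\<pi> x * c \<partial>\<pi>)"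
          unfolding g_def by (simp add: algebra_simps)
        also have "\<dots> = (\<integral>x. D\<pi> x * g x \<partial>\<pi>) + Zp * c"
          using iDpg Dmu unfolding Zp_def by simp
        finally show ?thesis .
      qed
      have lhs: "(\<integral>x. f x \<partial>reweight \<mu> D\<mu>) - (\<integral>x. f x \<partial>reweight \<pi> D\<pi>) = - (\<integral>x. D\<pi> x * g x \<partial>\<pi>) / Zp"
        using rw[of \<mu> D\<mu> Zm] rw[of \<pi> D\<pi> Zp] gp Zp0 unfolding c_def[symmetric]
        by (simp add: divide_simps) (simp add: algebra_simps)
      have b1: "(\<integral>x. D\<mu> x * g x \<partial>\<mu>) \<le> (\<integral>x. \<epsilon>2 + h x * g x + \<phi> x \<partial>\<mu>)"
        by (rule integral_mono) (use iDmg ihgm phimu in simp,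
            use iDmg ihgm phimu in simp, rule l1[OF _ cb], use eps2 hge h\<phi> in \<open>auto simp: abs_minus_commute\<close>)
      have b2: "(\<integral>x. h x * g x - \<phi> x \<partial>\<pi>) \<le> (\<integral>x. D\<pi> x * g x \<partial>\<pi>)"
        by (rule integral_mono) (use iDpg ihgm phimu in simp,
            use iDpg ihgm phimu in simp, rule l2[OF cb], use hge h\<phi> in auto)
      have hglip: "(1 + 1/\<rho>)-lipschitz_on UNIV (\<lambda>x. h x * g x)"
      proof (rule lipschitz_onI)
        fix x y
        have "\<bar>h x - h y\<bar> \<le> dist x y / \<rho>" using lipschitz_onD[OF hlip, of x y] by (simp add: dist_real_def)
        moreover have "\<bar>g x - g y\<bar> \<le> dist x y" using fd[of x y] unfolding g_def by simp
        ultimately show "dist (h x * g x) (h y * g y) \<le> (1 + 1 / \<rho>) * dist x y"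
          using l3[OF hb cb] by (simp add: dist_real_def)
      qed (use rho in simp)
      have b3: "(\<integral>x. h x * g x \<partial>\<mu>) - (\<integral>x. h x * g x \<partial>\<pi>) \<le> (1 + 1/\<rho>) * \<epsilon>1"
      proof -
        have "0 < 1 + 1/\<rho>" using rho by (simp add: add_pos_pos)
        from Wle[OF hglip this] show ?thesis .
      qed
      have b4: "(1 + 1/\<rho>) * \<epsilon>1 \<le> 2 * \<epsilon>1 / \<rho>"
      proof -
        have "1 \<le> 1 / \<rho>" using rho by simp
        then have "\<epsilon>1 * 1 \<le> \<epsilon>1 * (1 / \<rho>)" using e1 by (intro mult_left_mono) auto
        then have "\<epsilon>1 \<le> \<epsilon>1 / \<rho>" by simp
        moreover have "(1 + 1/\<rho>) * \<epsilon>1 = \<epsilon>1 + \<epsilon>1 / \<rho>" "2 * \<epsilon>1 / \<rho> = \<epsilon>1 / \<rho> + \<epsilon>1 / \<rho>"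
          by (simp_all add: algebra_simps add_divide_distrib)
        ultimately show ?thesis by linarith
      qed
      have b1': "0 \<le> \<epsilon>2 + (\<integral>x. h x * g x \<partial>\<mu>) + (\<integral>x. \<phi> x \<partial>\<mu>)"
        using b1 g0 ihgm phimu by (simp add: pm.prob_space)
      have b2': "(\<integral>x. h x * g x \<partial>\<pi>) - (\<integral>x. \<phi> x \<partial>\<pi>) \<le> (\<integral>x. D\<pi> x * g x \<partial>\<pi>)"
        using b2 ihgm phimu by simp
      have num: "- (\<integral>x. D\<pi> x * g x \<partial>\<pi>) \<le> E"
        unfolding E_def using b1' b2' b3 b4 int\<phi>p int\<phi>m by linarith
      have "- (\<integral>x. D\<pi> x * g x \<partial>\<pi>) / Zp \<le> E / Zp" using divide_right_mono[OF num, of Zp] Zp0 by simp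
      also have "\<dots> \<le> E / \<delta>" using E0 ZpZ delta(1) by (simp add: frac_le)
      finally show ?thesis using lhs by simp
    qed
    show ?thesis unfolding W1_def E_def[symmetric]
    proof (rule cSup_least)
      show "{(\<integral>x. f x \<partial>reweight \<mu> D\<mu>) - (\<integral>x. f x \<partial>reweight \<pi> D\<pi>) |f. 1-lipschitz_on UNIV f} \<noteq> {}"
        by (auto intro!: exI[of _ "\<lambda>_. 0"] simp: lipschitz_on_def)
    next
      fix y :: real assume "y \<in> {(\<integral>x. f x \<partial>reweight \<mu> D\<mu>) - (\<integral>x. f x \<partial>reweight \<pi> D\<pi>) |f. 1-lipschitz_on UNIV f}"
      then obtain f where fy: "y = (\<integral>x. f x \<partial>reweight \<mu> D\<mu>) - (\<integral>x. f x \<partial>reweight \<pi> D\<pi>)"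
        and fl: "1-lipschitz_on UNIV f"
        by blast
      show "y \<le> 1 / \<delta> * E" unfolding fy by (rule main[OF fl])
    qed
  qed
  note P1 = part1[unfolded Zm_def mA_def Ab_def]
  note P2 = part2[unfolded Zm_def mA_def Ab_def]
  show ?thesis
  proof (intro conjI impI)
    assume "0 < (\<integral>x. D\<mu> x \<partial>\<mu>)"
    then show "W1 (reweight \<mu> D\<mu>) (reweight \<pi> D\<pi>)
             \<le> (1 / \<delta>) * (3 * \<epsilon>1 / \<rho> + \<epsilon>2 + 2 * measure \<pi> (A_bar D\<pi> \<rho>))" by (rule P1)
  next
    assume "(1 / \<delta>) * (3 * \<epsilon>1 / \<rho> + \<epsilon>2 + 2 * measure \<pi> (A_bar D\<pi> \<rho>)) < 1"
    then show "0 < (\<integral>x. D\<mu> x \<partial>\<mu>)" by (rule P2)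
  qed
qed

end
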